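(* For every integer $n\ge 3$, the number of spanning trees of $M_n$ is $$\tau(M_n)=\frac{n}{2}\,(p^{n}+q^{n}+2).$$
   Context: For an integer $n\ge 3$, the Möbius polyomino network $M_n$ is the graph with vertex set $\{1,\dots,n\}\cup\{1',\dots,n'\}$ whose edges are $\{i,i+1\}$ and $\{i',(i+1)'\}$ for $1\le i\le n-1$, $\{i,i'\}$ for $1\le i\le n$, and the two edges $\{1,n'\}$ and $\{1',n\}$. $p=2+\sqrt3$, $q=2-\sqrt3$. $\tau(G)$ denotes the number of spanning trees of $G$. *)

theory Defs
  imports Complex_Main
begin

definition adj :: "'a set set \<Rightarrow> 'a \<Rightarrow> 'a \<Rightarrow> bool" where
  "adj E u v \<longleftrightarrow> {u, v} \<in> E"

definition graph_connected :: "'a set \<Rightarrow> 'a set set \<Rightarrow> bool" where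
  "graph_connected V E \<longleftrightarrow> (\<forall>u\<in>V. \<forall>v\<in>V. (adj E)\<^sup>*\<^sup>* u v)"

definition is_cycle :: "'a set set \<Rightarrow> 'a list \<Rightarrow> bool" where
  "is_cycle E cs \<longleftrightarrow> length cs \<ge> 3 \<and> distinct cs \<and>
     (\<forall>i. i + 1 < length cs \<longrightarrow> {cs ! i, cs ! (i + 1)} \<in> E) \<and> {last cs, hd cs} \<in> E"

definition acyclic_graph :: "'a set set \<Rightarrow> bool" where
  "acyclic_graph E \<longleftrightarrow> \<not> (\<exists>cs. is_cycle E cs)"

definition spanning_tree :: "'a set \<Rightarrow> 'a set set \<Rightarrow> 'a set set \<Rightarrow> bool" where
  "spanning_tree V E T \<longleftrightarrow> T \<subseteq> E \<and> graph_connected V T \<and> acyclic_graph T"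

definition num_spanning_trees :: "'a set \<Rightarrow> 'a set set \<Rightarrow> nat" where
  "num_spanning_trees V E = card {T. spanning_tree V E T}"

text \<open>Moebius polyomino network M_n: vertex i is (i, False), vertex i' is (i, True).\<close>
definition mobius_verts :: "nat \<Rightarrow> (nat \<times> bool) set" where
  "mobius_verts n = {(i, b). 1 \<le> i \<and> i \<le> n}"

definition mobius_edges :: "nat \<Rightarrow> (nat \<times> bool) set set" where
  "mobius_edges n =
     {{(i, b), (i + 1, b)} | i b. 1 \<le> i \<and> i \<le> n - 1}
   \<union> {{(i, False), (i, True)} | i. 1 \<le> i \<and> i \<le> n}
   \<union> {{(1, False), (n, True)}, {(1, True), (n, False)}}"

end

theory Submission
  imports Defs
begin

abbreviation conn :: "'a set set \<Rightarrow> 'a \<Rightarrow> 'a \<Rightarrow> bool" where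
  "conn G \<equiv> (adj G)\<^sup>*\<^sup>*"

lemma adj_sym: "adj G u v = adj G v u"
  by (simp add: adj_def insert_commute)

lemma conn_sym: "conn G u v \<Longrightarrow> conn G v u"
proof (induction rule: rtranclp_induct)
  case base then show ?case by simp
next
  case (step y z)
  then show ?case
    by (meson adj_sym converse_rtranclp_into_rtranclp)
qed

lemma conn_trans: "conn G u v \<Longrightarrow> conn G v w \<Longrightarrow> conn G u w"
  by (rule rtranclp_trans)

lemma conn_edge: "{u,v} \<in> G \<Longrightarrow> conn G u v"
  by (simp add: adj_def r_into_rtranclp)

lemma conn_mono: assumes "G \<subseteq> H" "conn G u v" shows "conn H u v"
  using assms(2)
proof (induction rule: rtranclp_induct)
  case base then show ?case by simp
next
  case (step y z)
  then show ?case using assms(1)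
    by (metis adj_def rtranclp.rtrancl_into_rtrancl subsetD)
qed

lemma conn_insert:
  "conn (insert {u,v} G) x y \<longleftrightarrow>
     conn G x y \<or> (conn G x u \<and> conn G v y) \<or> (conn G x v \<and> conn G u y)"
proof
  assume "conn (insert {u,v} G) x y"
  then show "conn G x y \<or> (conn G x u \<and> conn G v y) \<or> (conn G x v \<and> conn G u y)"
  proof (induction rule: rtranclp_induct)
    case base then show ?case by simp
  next
    case (step y z)
    from step(2) have "{y,z} \<in> G \<or> {y,z} = {u,v}" by (auto simp: adj_def)
    then show ?case
    proof
      assume "{y,z} \<in> G"
      then have e: "conn G y z" by (rule conn_edge)
      show ?case using step(3) e by (meson conn_trans)
    next
      assume "{y,z} = {u,v}"
      then have "(y = u \<and> z = v) \<or> (y = v \<and> z = u)" by (simp add: doubleton_eq_iff)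
      then show ?case using step(3) by auto
    qed
  qed
next
  have sub: "G \<subseteq> insert {u,v} G" by auto
  have uv: "conn (insert {u,v} G) u v" "conn (insert {u,v} G) v u"
    by (auto intro: conn_edge simp: insert_commute)
  assume "conn G x y \<or> (conn G x u \<and> conn G v y) \<or> (conn G x v \<and> conn G u y)"
  then show "conn (insert {u,v} G) x y"
    using conn_mono[OF sub] uv by (meson conn_trans)
qed

lemma conn_insert_endpoint:
  "conn (insert {u,v} G) x y \<Longrightarrow> conn G x y \<or> conn G x u \<or> conn G x v"
  by (auto simp: conn_insert)

lemma conn_isolated:
  assumes "\<forall>e\<in>G. x \<notin> e" "conn G x y" shows "y = x"
  using assms(2)
proof (cases rule: converse_rtranclpE)
  case base then show ?thesis by simp
next
  case (step z)
  then show ?thesis using assms(1) by (auto simp: adj_def)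
qed

lemma acyclic_mono: "H \<subseteq> G \<Longrightarrow> acyclic_graph G \<Longrightarrow> acyclic_graph H"
  unfolding acyclic_graph_def is_cycle_def by blast

lemma simple_path:
  assumes "conn G u v"
  shows "\<exists>ws. ws \<noteq> [] \<and> hd ws = u \<and> last ws = v \<and> distinct ws \<and>
              (\<forall>i. i + 1 < length ws \<longrightarrow> {ws ! i, ws ! (i + 1)} \<in> G)"
  using assms
proof (induction rule: converse_rtranclp_induct)
  case base
  then show ?case by (intro exI[of _ "[v]"]) auto
next
  case (step u w)
  then obtain ws where ws: "ws \<noteq> []" "hd ws = w" "last ws = v" "distinct ws"
    "\<forall>i. i + 1 < length ws \<longrightarrow> {ws ! i, ws ! (i + 1)} \<in> G" by blast
  have uw: "{u,w} \<in> G" using step(1) by (simp add: adj_def)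
  show ?case
  proof (cases "u \<in> set ws")
    case False
    show ?thesis
    proof (intro exI[of _ "u # ws"] conjI allI impI)
      show "last (u # ws) = v" using ws by simp
      show "distinct (u # ws)" using ws False by simp
      fix i assume i: "i + 1 < length (u # ws)"
      show "{(u # ws) ! i, (u # ws) ! (i + 1)} \<in> G"
      proof (cases i)
        case 0 then show ?thesis using ws uw by (simp add: hd_conv_nth)
      next
        case (Suc j) then show ?thesis using ws i by simp
      qed
    qed auto
  next
    case True
    then obtain i where i: "i < length ws" "ws ! i = u" by (auto simp: in_set_conv_nth)
    show ?thesis
    proof (intro exI[of _ "drop i ws"] conjI allI impI)
      show "drop i ws \<noteq> []" using i by simp
      show "hd (drop i ws) = u" using i by (simp add: hd_drop_conv_nth)
      show "last (drop i ws) = v" using i ws by simp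
      show "distinct (drop i ws)" using ws by simp
      fix j assume "j + 1 < length (drop i ws)"
      then show "{drop i ws ! j, drop i ws ! (j + 1)} \<in> G" using ws i
        by (simp add: add.assoc)
    qed
  qed
qed

lemma simple_path_obt:
  assumes "conn G u v"
  obtains ws where "ws \<noteq> []" "hd ws = u" "last ws = v" "distinct ws"
    "\<forall>i. i + 1 < length ws \<longrightarrow> {ws ! i, ws ! (i + 1)} \<in> G"
proof -
  from simple_path[OF assms] obtain ws where
    "ws \<noteq> [] \<and> hd ws = u \<and> last ws = v \<and> distinct ws \<and>
     (\<forall>i. i + 1 < length ws \<longrightarrow> {ws ! i, ws ! (i + 1)} \<in> G)" by (rule exE)
  then show ?thesis by (intro that[of ws]) auto
qed

lemma segment_conn:
  assumes "\<forall>j. a \<le> j \<and> j < b \<longrightarrow> {cs ! j, cs ! (j + 1)} \<in> G" "a \<le> b"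
  shows "conn G (cs ! a) (cs ! b)"
  using assms
proof (induction b)
  case 0 then show ?case by simp
next
  case (Suc b)
  show ?case
  proof (cases "a = Suc b")
    case True then show ?thesis by simp
  next
    case False
    then have ab: "a \<le> b" using Suc.prems(2) by simp
    have h1: "\<forall>j. a \<le> j \<and> j < b \<longrightarrow> {cs ! j, cs ! (j + 1)} \<in> G"
      using Suc.prems(1) by simp
    have c1: "conn G (cs ! a) (cs ! b)" using Suc.IH[OF h1 ab] .
    have "{cs ! b, cs ! (b + 1)} \<in> G" using Suc.prems(1) ab by simp
    then have c2: "conn G (cs ! b) (cs ! Suc b)" using conn_edge by simp
    show ?thesis using conn_trans[OF c1 c2] .
  qed
qed

lemma acyclic_insert:
  assumes uv: "u \<noteq> v" "{u,v} \<notin> G"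
  shows "acyclic_graph (insert {u,v} G) \<longleftrightarrow> acyclic_graph G \<and> \<not> conn G u v"
proof
  assume ac: "acyclic_graph (insert {u,v} G)"
  have "acyclic_graph G" by (rule acyclic_mono[OF _ ac]) blast
  moreover have "\<not> conn G u v"
  proof
    assume "conn G u v"
    then obtain ws where ws: "ws \<noteq> []" "hd ws = u" "last ws = v" "distinct ws"
      "\<forall>i. i + 1 < length ws \<longrightarrow> {ws ! i, ws ! (i + 1)} \<in> G"
      by (rule simple_path_obt)
    have "length ws \<noteq> 1"
    proof
      assume "length ws = 1"
      then obtain x where "ws = [x]" by (cases ws) auto
      then show False using ws uv by simp
    qed
    moreover have "length ws \<noteq> 2"
    proof
      assume l: "length ws = 2"
      then obtain x y where xy: "ws = [x, y]"
        by (cases ws; cases "tl ws") auto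
      have "{ws ! 0, ws ! (0 + 1)} \<in> G" using ws(5) l by simp
      then show False using uv ws xy by simp
    qed
    moreover have "length ws \<noteq> 0" using ws by simp
    ultimately have l3: "length ws \<ge> 3" by linarith
    have "{last ws, hd ws} \<in> insert {u,v} G" using ws by (simp add: insert_commute)
    moreover have "\<forall>i. i + 1 < length ws \<longrightarrow> {ws ! i, ws ! (i + 1)} \<in> insert {u,v} G"
      using ws(5) by blast
    ultimately have "is_cycle (insert {u,v} G) ws"
      unfolding is_cycle_def using ws(4) l3 by blast
    then show False using ac unfolding acyclic_graph_def by blast
  qed
  ultimately show "acyclic_graph G \<and> \<not> conn G u v" by blast
next
  assume h: "acyclic_graph G \<and> \<not> conn G u v"
  show "acyclic_graph (insert {u,v} G)"
    unfolding acyclic_graph_def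
  proof
    assume "\<exists>cs. is_cycle (insert {u, v} G) cs"
    then obtain cs where cs: "is_cycle (insert {u, v} G) cs" by blast
    define m where "m = length cs"
    have m3: "m \<ge> 3" and dist: "distinct cs"
      and inner: "\<forall>i. i + 1 < m \<longrightarrow> {cs ! i, cs ! (i + 1)} \<in> insert {u,v} G"
      and clos: "{last cs, hd cs} \<in> insert {u,v} G"
      using cs unfolding is_cycle_def m_def by auto
    have hd: "hd cs = cs ! 0" and lst: "last cs = cs ! (m - 1)"
    proof -
      have "cs \<noteq> []" using m3 unfolding m_def by auto
      then show "hd cs = cs ! 0" "last cs = cs ! (m - 1)"
        unfolding m_def by (simp_all add: hd_conv_nth last_conv_nth)
    qed
    have neq: "\<And>i j. i < m \<Longrightarrow> j < m \<Longrightarrow> cs ! i = cs ! j \<longleftrightarrow> i = j"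
      using dist by (simp add: m_def nth_eq_iff_index_eq)
    show False
    proof (cases "{last cs, hd cs} \<in> G")
      case False
      then have e: "{last cs, hd cs} = {u,v}" using clos by auto
      have "\<forall>j. 0 \<le> j \<and> j < m - 1 \<longrightarrow> {cs ! j, cs ! (j + 1)} \<in> G"
      proof (intro allI impI)
        fix j assume j: "0 \<le> j \<and> j < m - 1"
        have "{cs ! j, cs ! (j + 1)} \<noteq> {cs ! (m - 1), cs ! 0}"
        proof
          assume "{cs ! j, cs ! (j + 1)} = {cs ! (m - 1), cs ! 0}"
          then have "(cs ! j = cs ! (m - 1) \<and> cs ! (j+1) = cs ! 0) \<or>
                     (cs ! j = cs ! 0 \<and> cs ! (j+1) = cs ! (m - 1))"
            by (simp add: doubleton_eq_iff)
          moreover have "cs ! j = cs ! (m - 1) \<longleftrightarrow> j = m - 1" by (rule neq) (use j m3 in auto)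
          moreover have "cs ! (j+1) = cs ! (m - 1) \<longleftrightarrow> j + 1 = m - 1" by (rule neq) (use j m3 in auto)
          moreover have "cs ! j = cs ! 0 \<longleftrightarrow> j = 0" by (rule neq) (use j m3 in auto)
          ultimately have "j = m - 1 \<or> (j = 0 \<and> j + 1 = m - 1)" by blast
          then show False using j m3 by presburger
        qed
        moreover have "{cs ! j, cs ! (j + 1)} \<in> insert {u,v} G" using inner j by simp
        moreover have "{u,v} = {cs ! (m - 1), cs ! 0}" using e hd lst by simp
        ultimately show "{cs ! j, cs ! (j + 1)} \<in> G" by blast
      qed
      then have "conn G (cs ! 0) (cs ! (m - 1))" by (intro segment_conn) auto
      then show False using e h hd lst conn_sym by (metis doubleton_eq_iff)
    next
      case True
      show False
      proof (cases "\<forall>i. i + 1 < m \<longrightarrow> {cs ! i, cs ! (i + 1)} \<in> G")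
        case True
        then have "is_cycle G cs" using cs \<open>{last cs, hd cs} \<in> G\<close>
          unfolding is_cycle_def m_def by auto
        then show False using h unfolding acyclic_graph_def by blast
      next
        case False
        then obtain i where i: "i + 1 < m" "{cs ! i, cs ! (i + 1)} \<notin> G" by blast
        then have e: "{cs ! i, cs ! (i + 1)} = {u,v}" using inner by auto
        have oth: "{cs ! j, cs ! (j + 1)} \<in> G" if j: "j + 1 < m" "j \<noteq> i" for j
        proof -
          have "{cs ! j, cs ! (j + 1)} \<noteq> {cs ! i, cs ! (i + 1)}"
          proof
            assume "{cs ! j, cs ! (j + 1)} = {cs ! i, cs ! (i + 1)}"
            then have "(cs ! j = cs ! i \<and> cs ! (j+1) = cs ! (i+1)) \<or>
                       (cs ! j = cs ! (i+1) \<and> cs ! (j+1) = cs ! i)"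
              by (simp add: doubleton_eq_iff)
            then show False using j i neq[of j i] neq[of j "i+1"] neq[of "j+1" i] by auto
          qed
          then show ?thesis using inner j e by auto
        qed
        have c1: "conn G (cs ! (i + 1)) (cs ! (m - 1))"
          by (rule segment_conn) (use oth i in auto)
        have c2: "conn G (cs ! (m - 1)) (cs ! 0)"
          using \<open>{last cs, hd cs} \<in> G\<close> hd lst conn_edge by metis
        have c3: "conn G (cs ! 0) (cs ! i)"
          by (rule segment_conn) (use oth i in auto)
        have "conn G (cs ! (i + 1)) (cs ! i)" using c1 c2 c3 by (meson conn_trans)
        then show False using e h conn_sym by (metis doubleton_eq_iff)
      qed
    qed
  qed
qed

datatype lab = LA | LB | LC | LD | LX | LY

lemma lab_all: "(\<forall>x. P x) \<longleftrightarrow> P LA \<and> P LB \<and> P LC \<and> P LD \<and> P LX \<and> P LY"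
  by (metis lab.exhaust)

fun pt :: "nat \<Rightarrow> lab \<Rightarrow> nat \<times> bool" where
  "pt k LA = (1, False)"
| "pt k LB = (1, True)"
| "pt k LC = (k, False)"
| "pt k LD = (k, True)"
| "pt k LX = (Suc k, False)"
| "pt k LY = (Suc k, True)"

definition EE :: "nat \<Rightarrow> (nat \<times> bool) set set" where
  "EE k = {{(i, b), (i + 1, b)} | i b. 1 \<le> i \<and> i < k} \<union> {{(i, False), (i, True)} | i. 1 \<le> i \<and> i \<le> k}"

definition rel :: "nat \<Rightarrow> (nat \<times> bool) set set \<Rightarrow> lab \<Rightarrow> lab \<Rightarrow> bool" where
  "rel k F a b = conn F (pt k a) (pt k b)"

definition good :: "nat \<Rightarrow> (nat \<times> bool) set set \<Rightarrow> bool" where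
  "good k F \<longleftrightarrow> F \<subseteq> EE k \<and> acyclic_graph F \<and>
     (\<forall>w\<in>mobius_verts k. \<exists>a\<in>{LA,LB,LC,LD}. conn F w (pt k a))"

definition addE :: "(lab \<Rightarrow> lab \<Rightarrow> bool) \<Rightarrow> lab \<Rightarrow> lab \<Rightarrow> lab \<Rightarrow> lab \<Rightarrow> bool" where
  "addE R u v = (\<lambda>a b. R a b \<or> (R a u \<and> R v b) \<or> (R a v \<and> R u b))"

definition sa :: "bool \<Rightarrow> lab \<Rightarrow> lab \<Rightarrow> (lab \<Rightarrow> lab \<Rightarrow> bool) \<Rightarrow> lab \<Rightarrow> lab \<Rightarrow> bool" where
  "sa b u v R = (if b then addE R u v else R)"

definition addif :: "bool \<Rightarrow> 'a set \<Rightarrow> 'a set set \<Rightarrow> 'a set set" where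
  "addif b e G = (if b then insert e G else G)"

lemma EE_verts: "e \<in> EE k \<Longrightarrow> x \<in> e \<Longrightarrow> 1 \<le> fst x \<and> fst x \<le> k"
  unfolding EE_def by auto

lemma conn_out:
  assumes "F \<subseteq> EE k" "k < fst x" "conn F x y" shows "y = x"
proof (rule conn_isolated[OF _ assms(3)])
  show "\<forall>e\<in>F. x \<notin> e" using assms(1,2) EE_verts by fastforce
qed

lemma conn_out2:
  assumes "F \<subseteq> EE k" "k < fst x" "conn F y x" shows "y = x"
  using conn_out[OF assms(1,2) conn_sym[OF assms(3)]] by simp

lemma rel_addif:
  "rel k (addif b {pt k u, pt k v} G) = sa b u v (rel k G)"
  unfolding rel_def sa_def addif_def addE_def
  by (auto simp: conn_insert fun_eq_iff)

lemma acyc_addif: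
  assumes "{pt k u, pt k v} \<notin> G" "pt k u \<noteq> pt k v"
  shows "acyclic_graph (addif b {pt k u, pt k v} G) \<longleftrightarrow> acyclic_graph G \<and> (b \<longrightarrow> \<not> rel k G u v)"
  using acyclic_insert[OF assms(2,1)] unfolding addif_def rel_def by auto

lemma conn_addif_cases:
  "conn (addif b {p, q} G) w y \<Longrightarrow> conn G w y \<or> conn G w p \<or> conn G w q"
proof (cases b)
  case True
  assume "conn (addif b {p, q} G) w y"
  then have "conn (insert {p, q} G) w y" using True by (simp add: addif_def)
  then show ?thesis by (rule conn_insert_endpoint)
next
  case False
  assume "conn (addif b {p, q} G) w y"
  then show ?thesis using False by (simp add: addif_def)
qed

lemma addif_mono: "G \<subseteq> addif b e G"
  unfolding addif_def by auto


fun Ext :: "nat \<Rightarrow> (nat \<times> bool) set set \<Rightarrow> bool \<times> bool \<times> bool \<Rightarrow> (nat \<times> bool) set set" where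
  "Ext k F (b1, b2, b3) = addif b3 {pt k LX, pt k LY} (addif b2 {pt k LD, pt k LY} (addif b1 {pt k LC, pt k LX} F))"

fun stp :: "(lab \<Rightarrow> lab \<Rightarrow> bool) \<Rightarrow> bool \<times> bool \<times> bool \<Rightarrow> lab \<Rightarrow> lab \<Rightarrow> bool" where
  "stp \<sigma> (b1, b2, b3) = sa b3 LX LY (sa b2 LD LY (sa b1 LC LX \<sigma>))"

fun ok :: "(lab \<Rightarrow> lab \<Rightarrow> bool) \<Rightarrow> bool \<times> bool \<times> bool \<Rightarrow> bool" where
  "ok \<sigma> (b1, b2, b3) = ((b1 \<longrightarrow> \<not> \<sigma> LC LX) \<and> (b2 \<longrightarrow> \<not> sa b1 LC LX \<sigma> LD LY) \<and>
     (b3 \<longrightarrow> \<not> sa b2 LD LY (sa b1 LC LX \<sigma>) LX LY) \<and>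
     (\<exists>t\<in>{LA,LB,LX,LY}. stp \<sigma> (b1, b2, b3) LC t) \<and> (\<exists>t\<in>{LA,LB,LX,LY}. stp \<sigma> (b1, b2, b3) LD t))"

fun ren :: "lab \<Rightarrow> lab" where
  "ren LA = LA" | "ren LB = LB" | "ren LC = LX" | "ren LD = LY" | "ren LX = LX" | "ren LY = LY"

definition trs :: "(lab \<Rightarrow> lab \<Rightarrow> bool) \<Rightarrow> bool \<times> bool \<times> bool \<Rightarrow> lab \<Rightarrow> lab \<Rightarrow> bool" where
  "trs \<sigma> bs = (\<lambda>a b. if a \<in> {LX, LY} \<or> b \<in> {LX, LY} then a = b else stp \<sigma> bs (ren a) (ren b))"

definition termc :: "nat \<Rightarrow> (nat \<times> bool) set set \<Rightarrow> bool" where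
  "termc k F \<longleftrightarrow> (\<forall>w\<in>mobius_verts k. \<exists>a\<in>{LA,LB,LC,LD}. conn F w (pt k a))"

lemma good_alt: "good k F \<longleftrightarrow> F \<subseteq> EE k \<and> acyclic_graph F \<and> termc k F"
  unfolding good_def termc_def by simp

lemma EE_Suc:
  assumes "1 \<le> k"
  shows "EE (Suc k) = insert {pt k LC, pt k LX} (insert {pt k LD, pt k LY} (insert {pt k LX, pt k LY} (EE k)))"
proof
  show "EE (Suc k) \<subseteq> insert {pt k LC, pt k LX} (insert {pt k LD, pt k LY} (insert {pt k LX, pt k LY} (EE k)))"
  proof
    fix e assume "e \<in> EE (Suc k)"
    then consider (r) i b where "e = {(i, b), (i + 1, b)}" "1 \<le> i" "i < Suc k"
      | (c) i where "e = {(i, False), (i, True)}" "1 \<le> i" "i \<le> Suc k"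
      unfolding EE_def by blast
    then show "e \<in> insert {pt k LC, pt k LX} (insert {pt k LD, pt k LY} (insert {pt k LX, pt k LY} (EE k)))"
    proof cases
      case r
      show ?thesis
      proof (cases "i < k")
        case True then have "e \<in> EE k" using r unfolding EE_def by blast
        then show ?thesis by blast
      next
        case False then have "i = k" using r by simp
        then show ?thesis using r by (cases b) auto
      qed
    next
      case c
      show ?thesis
      proof (cases "i \<le> k")
        case True then have "e \<in> EE k" using c unfolding EE_def by blast
        then show ?thesis by blast
      next
        case False then have "i = Suc k" using c by simp
        then show ?thesis using c by auto
      qed
    qed
  qed
next
  have a: "EE k \<subseteq> EE (Suc k)" unfolding EE_def by fastforce
  have b: "{pt k LC, pt k LX} \<in> EE (Suc k)" "{pt k LD, pt k LY} \<in> EE (Suc k)"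
          "{pt k LX, pt k LY} \<in> EE (Suc k)"
    using assms unfolding EE_def by auto
  show "insert {pt k LC, pt k LX} (insert {pt k LD, pt k LY} (insert {pt k LX, pt k LY} (EE k))) \<subseteq> EE (Suc k)"
    using a b by blast
qed

lemma notin_EE: "x \<in> e \<Longrightarrow> k < fst x \<Longrightarrow> e \<notin> EE k"
  using EE_verts by fastforce

lemma rel_Ext: "rel k (Ext k F bs) = stp (rel k F) bs"
  by (cases bs) (simp only: Ext.simps stp.simps rel_addif)

lemma acyc_Ext:
  assumes F: "F \<subseteq> EE k"
  shows "acyclic_graph (Ext k F (b1, b2, b3)) \<longleftrightarrow> acyclic_graph F \<and> (b1 \<longrightarrow> \<not> rel k F LC LX) \<and>
     (b2 \<longrightarrow> \<not> sa b1 LC LX (rel k F) LD LY) \<and> (b3 \<longrightarrow> \<not> sa b2 LD LY (sa b1 LC LX (rel k F)) LX LY)"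
proof -
  define F1 where "F1 = addif b1 {pt k LC, pt k LX} F"
  define F2 where "F2 = addif b2 {pt k LD, pt k LY} F1"
  have n1: "{pt k LC, pt k LX} \<notin> F" using F notin_EE[of "pt k LX" "{pt k LC, pt k LX}" k] by auto
  have n2: "{pt k LD, pt k LY} \<notin> F1"
  proof -
    have "{pt k LD, pt k LY} \<notin> F" using F notin_EE[of "pt k LY" "{pt k LD, pt k LY}" k] by auto
    moreover have "{pt k LD, pt k LY} \<noteq> {pt k LC, pt k LX}" by (auto simp: doubleton_eq_iff)
    ultimately show ?thesis unfolding F1_def addif_def by auto
  qed
  have n3: "{pt k LX, pt k LY} \<notin> F2"
  proof -
    have "{pt k LX, pt k LY} \<notin> F" using F notin_EE[of "pt k LY" "{pt k LX, pt k LY}" k] by auto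
    moreover have "{pt k LX, pt k LY} \<noteq> {pt k LC, pt k LX}" by (auto simp: doubleton_eq_iff)
    moreover have "{pt k LX, pt k LY} \<noteq> {pt k LD, pt k LY}" by (auto simp: doubleton_eq_iff)
    ultimately show ?thesis unfolding F2_def F1_def addif_def by auto
  qed
  have r1: "rel k F1 = sa b1 LC LX (rel k F)" unfolding F1_def by (rule rel_addif)
  have r2: "rel k F2 = sa b2 LD LY (sa b1 LC LX (rel k F))" unfolding F2_def by (simp only: rel_addif r1)
  have "acyclic_graph (Ext k F (b1, b2, b3)) = acyclic_graph (addif b3 {pt k LX, pt k LY} F2)"
    by (simp add: F2_def F1_def)
  also have "\<dots> \<longleftrightarrow> acyclic_graph F2 \<and> (b3 \<longrightarrow> \<not> rel k F2 LX LY)"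
    by (rule acyc_addif[OF n3]) simp
  also have "acyclic_graph F2 \<longleftrightarrow> acyclic_graph F1 \<and> (b2 \<longrightarrow> \<not> rel k F1 LD LY)"
    unfolding F2_def by (rule acyc_addif[OF n2]) simp
  also have "acyclic_graph F1 \<longleftrightarrow> acyclic_graph F \<and> (b1 \<longrightarrow> \<not> rel k F LC LX)"
    unfolding F1_def by (rule acyc_addif[OF n1]) simp
  finally show ?thesis using r1 r2 by simp
qed


lemma conn_addif_S:
  assumes "conn (addif b {p,q} G) w z" "z \<in> S" "p \<in> S" "q \<in> S"
  shows "\<exists>z'\<in>S. conn G w z'"
  using conn_addif_cases[OF assms(1)] assms(2-4) by blast

lemma conn_Ext_S:
  assumes "conn (Ext k F bs) w y" "y \<in> S" "pt k LC \<in> S" "pt k LD \<in> S" "pt k LX \<in> S" "pt k LY \<in> S"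
  shows "\<exists>z\<in>S. conn F w z"
proof -
  obtain b1 b2 b3 where bs: "bs = (b1, b2, b3)" by (cases bs) auto
  define F1 where "F1 = addif b1 {pt k LC, pt k LX} F"
  define F2 where "F2 = addif b2 {pt k LD, pt k LY} F1"
  have "conn (addif b3 {pt k LX, pt k LY} F2) w y" using assms(1) bs by (simp only: F2_def F1_def Ext.simps)
  then obtain z2 where z2: "z2 \<in> S" "conn F2 w z2"
    using conn_addif_S[of b3 "pt k LX" "pt k LY" F2 w y S] assms(2,5,6) by blast
  then obtain z1 where z1: "z1 \<in> S" "conn F1 w z1"
    using conn_addif_S[of b2 "pt k LD" "pt k LY" F1 w z2 S] assms(4,6) unfolding F2_def by blast
  then show ?thesis
    using conn_addif_S[of b1 "pt k LC" "pt k LX" F w z1 S] assms(3,5) unfolding F1_def by blast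
qed

lemma pt_Suc_ren: "a \<in> {LA,LB,LC,LD} \<Longrightarrow> pt (Suc k) a = pt k (ren a)"
  by auto

lemma Ext_sub: "1 \<le> k \<Longrightarrow> F \<subseteq> EE k \<Longrightarrow> Ext k F bs \<subseteq> EE (Suc k)"
  using EE_Suc[of k] by (cases bs) (auto simp: addif_def)

lemma verts_Suc: "w \<in> mobius_verts (Suc k) \<longleftrightarrow> w \<in> mobius_verts k \<or> w = (Suc k, False) \<or> w = (Suc k, True)"
  unfolding mobius_verts_def by (cases w; cases "snd w") auto

lemma term_Ext:
  assumes k: "1 \<le> k" and F: "F \<subseteq> EE k"
  shows "termc (Suc k) (Ext k F bs) \<longleftrightarrow> termc k F \<and>
     (\<exists>t\<in>{LA,LB,LX,LY}. stp (rel k F) bs LC t) \<and> (\<exists>t\<in>{LA,LB,LX,LY}. stp (rel k F) bs LD t)"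
proof -
  let ?F' = "Ext k F bs"
  have sub: "F \<subseteq> ?F'" by (cases bs) (auto simp: addif_def)
  have relF': "\<And>a b. stp (rel k F) bs a b = conn ?F' (pt k a) (pt k b)"
    using rel_Ext[of k F bs] by (simp add: rel_def fun_eq_iff)
  show ?thesis
  proof
    assume T: "termc (Suc k) ?F'"
    have t1: "termc k F" unfolding termc_def
    proof
      fix w assume w: "w \<in> mobius_verts k"
      then have "w \<in> mobius_verts (Suc k)" by (simp add: verts_Suc)
      then obtain a where a: "a \<in> {LA,LB,LC,LD}" "conn ?F' w (pt (Suc k) a)"
        using T unfolding termc_def by blast
      have "pt (Suc k) a \<in> pt k ` UNIV" using pt_Suc_ren[OF a(1)] by simp
      then have "\<exists>z\<in>pt k ` UNIV. conn F w z" by (rule conn_Ext_S[OF a(2)]) (rule rangeI)+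
      then obtain l where l: "conn F w (pt k l)" by blast
      have wk: "fst w \<le> k" using w unfolding mobius_verts_def by auto
      have "l \<noteq> LX" "l \<noteq> LY"
        using conn_out2[OF F, of "pt k LX" w] conn_out2[OF F, of "pt k LY" w] l wk by auto
      then have "l \<in> {LA,LB,LC,LD}" by (cases l) auto
      then show "\<exists>a\<in>{LA,LB,LC,LD}. conn F w (pt k a)" using l by blast
    qed
    have t2: "\<exists>t\<in>{LA,LB,LX,LY}. stp (rel k F) bs l t" if l: "l \<in> {LC, LD}" for l
    proof -
      have "pt k l \<in> mobius_verts (Suc k)" using l k unfolding mobius_verts_def by auto
      then obtain a where a: "a \<in> {LA,LB,LC,LD}" "conn ?F' (pt k l) (pt (Suc k) a)"
        using T unfolding termc_def by blast
      have "pt (Suc k) a = pt k (ren a)" using pt_Suc_ren[OF a(1)] .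
      then have "conn ?F' (pt k l) (pt k (ren a))" using a(2) by simp
      then have "stp (rel k F) bs l (ren a)" unfolding relF' .
      moreover have "ren a \<in> {LA,LB,LX,LY}" using a(1) by auto
      ultimately show ?thesis by blast
    qed
    show "termc k F \<and> (\<exists>t\<in>{LA,LB,LX,LY}. stp (rel k F) bs LC t) \<and> (\<exists>t\<in>{LA,LB,LX,LY}. stp (rel k F) bs LD t)"
      using t1 t2 by blast
  next
    assume A: "termc k F \<and> (\<exists>t\<in>{LA,LB,LX,LY}. stp (rel k F) bs LC t) \<and> (\<exists>t\<in>{LA,LB,LX,LY}. stp (rel k F) bs LD t)"
    have ren_inv: "\<exists>a\<in>{LA,LB,LC,LD}. pt k t = pt (Suc k) a" if "t \<in> {LA,LB,LX,LY}" for t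
      using that by auto
    have reach: "\<exists>a\<in>{LA,LB,LC,LD}. conn ?F' (pt k l) (pt (Suc k) a)" if l: "l \<in> {LA,LB,LC,LD}" for l
    proof -
      consider "l = LA" | "l = LB" | "l = LC" | "l = LD" using l by blast
      then show ?thesis
      proof cases
        case 1 then show ?thesis by (intro bexI[of _ LA]) auto
      next
        case 2 then show ?thesis by (intro bexI[of _ LB]) auto
      next
        case 3
        then obtain t where t: "t \<in> {LA,LB,LX,LY}" "conn ?F' (pt k LC) (pt k t)" using A relF' by blast
        then obtain a where "a \<in> {LA,LB,LC,LD}" "pt k t = pt (Suc k) a" using ren_inv by blast
        then show ?thesis using t 3 by auto
      next
        case 4
        then obtain t where t: "t \<in> {LA,LB,LX,LY}" "conn ?F' (pt k LD) (pt k t)" using A relF' by blast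
        then obtain a where "a \<in> {LA,LB,LC,LD}" "pt k t = pt (Suc k) a" using ren_inv by blast
        then show ?thesis using t 4 by auto
      qed
    qed
    show "termc (Suc k) ?F'" unfolding termc_def
    proof
      fix w assume "w \<in> mobius_verts (Suc k)"
      then consider "w \<in> mobius_verts k" | "w = pt (Suc k) LC" | "w = pt (Suc k) LD"
        by (auto simp: verts_Suc)
      then show "\<exists>a\<in>{LA,LB,LC,LD}. conn ?F' w (pt (Suc k) a)"
      proof cases
        case 1
        then obtain l where l: "l \<in> {LA,LB,LC,LD}" "conn F w (pt k l)" using A unfolding termc_def by blast
        then have c1: "conn ?F' w (pt k l)" using conn_mono[OF sub] by blast
        obtain a where a1: "a \<in> {LA,LB,LC,LD}" and a2: "conn ?F' (pt k l) (pt (Suc k) a)"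
          using reach[OF l(1)] by blast
        have "conn ?F' w (pt (Suc k) a)" by (rule conn_trans[OF c1 a2])
        then show ?thesis using a1 by blast
      next
        case 2 then show ?thesis by blast
      next
        case 3 then show ?thesis by blast
      qed
    qed
  qed
qed

lemma good_Ext:
  assumes k: "1 \<le> k" and F: "F \<subseteq> EE k"
  shows "good (Suc k) (Ext k F bs) \<longleftrightarrow> good k F \<and> ok (rel k F) bs"
proof -
  obtain b1 b2 b3 where bs: "bs = (b1, b2, b3)" by (cases bs) auto
  have s: "Ext k F bs \<subseteq> EE (Suc k)" by (rule Ext_sub[OF k F])
  have t: "termc (Suc k) (Ext k F bs) \<longleftrightarrow> termc k F \<and>
     (\<exists>t\<in>{LA,LB,LX,LY}. stp (rel k F) bs LC t) \<and> (\<exists>t\<in>{LA,LB,LX,LY}. stp (rel k F) bs LD t)"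
    by (rule term_Ext[OF k F])
  have a: "acyclic_graph (Ext k F bs) \<longleftrightarrow> acyclic_graph F \<and> (b1 \<longrightarrow> \<not> rel k F LC LX) \<and>
     (b2 \<longrightarrow> \<not> sa b1 LC LX (rel k F) LD LY) \<and> (b3 \<longrightarrow> \<not> sa b2 LD LY (sa b1 LC LX (rel k F)) LX LY)"
    unfolding bs by (rule acyc_Ext[OF F])
  have o: "ok (rel k F) bs \<longleftrightarrow> (b1 \<longrightarrow> \<not> rel k F LC LX) \<and>
     (b2 \<longrightarrow> \<not> sa b1 LC LX (rel k F) LD LY) \<and> (b3 \<longrightarrow> \<not> sa b2 LD LY (sa b1 LC LX (rel k F)) LX LY) \<and>
     (\<exists>t\<in>{LA,LB,LX,LY}. stp (rel k F) bs LC t) \<and> (\<exists>t\<in>{LA,LB,LX,LY}. stp (rel k F) bs LD t)"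
    unfolding bs by (simp only: ok.simps)
  show ?thesis unfolding good_alt using s t a o F by blast
qed


definition Inv :: "(lab \<Rightarrow> lab \<Rightarrow> bool) \<Rightarrow> bool" where
  "Inv \<sigma> \<longleftrightarrow> (\<forall>a. \<sigma> a a) \<and> (\<forall>a b. \<sigma> a b \<longrightarrow> \<sigma> b a) \<and> (\<forall>a b c. \<sigma> a b \<longrightarrow> \<sigma> b c \<longrightarrow> \<sigma> a c) \<and>
     (\<forall>b. \<sigma> LX b \<longleftrightarrow> b = LX) \<and> (\<forall>b. \<sigma> LY b \<longleftrightarrow> b = LY)"

lemma pt_eq_X: "1 \<le> k \<Longrightarrow> pt k b = pt k LX \<longleftrightarrow> b = LX"
  by (cases b) auto

lemma pt_eq_Y: "1 \<le> k \<Longrightarrow> pt k b = pt k LY \<longleftrightarrow> b = LY"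
  by (cases b) auto

lemma Inv_rel:
  assumes k: "1 \<le> k" and F: "F \<subseteq> EE k"
  shows "Inv (rel k F)"
proof -
  have refl: "\<forall>a. rel k F a a" unfolding rel_def by simp
  have sym: "\<forall>a b. rel k F a b \<longrightarrow> rel k F b a"
  proof (intro allI impI)
    fix a b assume "rel k F a b" then show "rel k F b a" unfolding rel_def by (rule conn_sym)
  qed
  have tr: "\<forall>a b c. rel k F a b \<longrightarrow> rel k F b c \<longrightarrow> rel k F a c"
  proof (intro allI impI)
    fix a b c assume "rel k F a b" "rel k F b c" then show "rel k F a c" unfolding rel_def by (rule conn_trans)
  qed
  have x: "\<forall>b. rel k F LX b \<longleftrightarrow> b = LX"
  proof
    fix b
    show "rel k F LX b \<longleftrightarrow> b = LX"
    proof
      assume "rel k F LX b"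
      then have c: "conn F (pt k LX) (pt k b)" unfolding rel_def .
      have "pt k b = pt k LX" by (rule conn_out[OF F _ c]) simp
      then show "b = LX" using pt_eq_X[OF k] by simp
    qed (simp add: rel_def)
  qed
  have y: "\<forall>b. rel k F LY b \<longleftrightarrow> b = LY"
  proof
    fix b
    show "rel k F LY b \<longleftrightarrow> b = LY"
    proof
      assume "rel k F LY b"
      then have c: "conn F (pt k LY) (pt k b)" unfolding rel_def .
      have "pt k b = pt k LY" by (rule conn_out[OF F _ c]) simp
      then show "b = LY" using pt_eq_Y[OF k] by simp
    qed (simp add: rel_def)
  qed
  show ?thesis unfolding Inv_def by (intro conjI refl sym tr x y)
qed

lemma InvD:
  assumes "Inv \<sigma>"
  shows "\<sigma> a a" and "\<sigma> a b \<Longrightarrow> \<sigma> b a" and "\<sigma> a b \<Longrightarrow> \<sigma> b c \<Longrightarrow> \<sigma> a c"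
    and "\<sigma> LX b \<longleftrightarrow> b = LX" and "\<sigma> LY b \<longleftrightarrow> b = LY"
proof -
  have H: "(\<forall>a. \<sigma> a a) \<and> (\<forall>a b. \<sigma> a b \<longrightarrow> \<sigma> b a) \<and> (\<forall>a b c. \<sigma> a b \<longrightarrow> \<sigma> b c \<longrightarrow> \<sigma> a c) \<and>
     (\<forall>b. \<sigma> LX b \<longleftrightarrow> b = LX) \<and> (\<forall>b. \<sigma> LY b \<longleftrightarrow> b = LY)"
    using assms unfolding Inv_def .
  note h1 = H[THEN conjunct1] and h2 = H[THEN conjunct2, THEN conjunct1]
    and h3 = H[THEN conjunct2, THEN conjunct2, THEN conjunct1]
    and h4 = H[THEN conjunct2, THEN conjunct2, THEN conjunct2, THEN conjunct1]
    and h5 = H[THEN conjunct2, THEN conjunct2, THEN conjunct2, THEN conjunct2]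
  show "\<sigma> a a" using h1 by (rule spec)
  show "\<sigma> a b \<Longrightarrow> \<sigma> b a" by (rule h2[rule_format])
  show "\<sigma> a b \<Longrightarrow> \<sigma> b c \<Longrightarrow> \<sigma> a c" by (rule h3[rule_format])
  show "\<sigma> LX b \<longleftrightarrow> b = LX" using h4 by (rule spec)
  show "\<sigma> LY b \<longleftrightarrow> b = LY" using h5 by (rule spec)
qed

lemma Inv_XY:
  assumes "Inv \<sigma>" "a \<in> {LX, LY} \<or> b \<in> {LX, LY}"
  shows "\<sigma> a b \<longleftrightarrow> a = b"
proof -
  note x = InvD(4)[OF assms(1)] and y = InvD(5)[OF assms(1)]
  have s: "\<sigma> a b \<longleftrightarrow> \<sigma> b a" using InvD(2)[OF assms(1), of a b] InvD(2)[OF assms(1), of b a] by blast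
  consider "a = LX" | "a = LY" | "b = LX" | "b = LY" using assms(2) by blast
  then show ?thesis
  proof cases
    case 1 then show ?thesis using x by auto
  next
    case 2 then show ?thesis using y by auto
  next
    case 3 then show ?thesis using x s by auto
  next
    case 4 then show ?thesis using y s by auto
  qed
qed

lemma rel_Suc_Ext:
  assumes k: "1 \<le> k" and F: "F \<subseteq> EE k"
  shows "rel (Suc k) (Ext k F bs) = trs (rel k F) bs"
proof (intro ext)
  fix a b
  have I: "Inv (rel (Suc k) (Ext k F bs))" using Inv_rel[OF _ Ext_sub[OF k F]] by simp
  show "rel (Suc k) (Ext k F bs) a b = trs (rel k F) bs a b"
  proof (cases "a \<in> {LX, LY} \<or> b \<in> {LX, LY}")
    case True
    then show ?thesis using Inv_XY[OF I True] unfolding trs_def by simp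
  next
    case False
    have a: "a \<in> {LA,LB,LC,LD}" using False by (cases a) simp_all
    have b: "b \<in> {LA,LB,LC,LD}" using False by (cases b) simp_all
    have "rel (Suc k) (Ext k F bs) a b = rel k (Ext k F bs) (ren a) (ren b)"
      unfolding rel_def pt_Suc_ren[OF a] pt_Suc_ren[OF b] ..
    also have "\<dots> = stp (rel k F) bs (ren a) (ren b)" by (simp only: rel_Ext)
    finally show ?thesis unfolding trs_def using False by simp
  qed
qed

lemma EE_sub_verts: "EE k \<subseteq> Pow (mobius_verts k)"
  using EE_verts unfolding mobius_verts_def by fastforce

lemma finite_verts: "finite (mobius_verts k)"
proof -
  have "mobius_verts k \<subseteq> {1..k} \<times> UNIV" unfolding mobius_verts_def by auto
  then show ?thesis by (rule finite_subset) simp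
qed

lemma finite_EE: "finite (EE k)"
  using finite_subset[OF EE_sub_verts] finite_verts by blast

definition GG :: "nat \<Rightarrow> (nat \<times> bool) set set set" where
  "GG k = {F. good k F}"

lemma finite_GG: "finite (GG k)"
proof -
  have "GG k \<subseteq> Pow (EE k)" unfolding GG_def good_def by auto
  then show ?thesis using finite_EE finite_subset by blast
qed

lemma Ext_inter:
  assumes F: "F \<subseteq> EE k" shows "Ext k F bs \<inter> EE k = F"
proof -
  have n: "{pt k LC, pt k LX} \<notin> EE k" "{pt k LD, pt k LY} \<notin> EE k" "{pt k LX, pt k LY} \<notin> EE k"
    using notin_EE[of "pt k LX" _ k] notin_EE[of "pt k LY" _ k] by auto
  show ?thesis using F n by (cases bs) (auto simp: addif_def)
qed

lemma Ext_mem: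
  assumes F: "F \<subseteq> EE k"
  shows "{pt k LC, pt k LX} \<in> Ext k F (b1, b2, b3) \<longleftrightarrow> b1"
    "{pt k LD, pt k LY} \<in> Ext k F (b1, b2, b3) \<longleftrightarrow> b2"
    "{pt k LX, pt k LY} \<in> Ext k F (b1, b2, b3) \<longleftrightarrow> b3"
proof -
  have n: "{pt k LC, pt k LX} \<notin> F" "{pt k LD, pt k LY} \<notin> F" "{pt k LX, pt k LY} \<notin> F"
    using F notin_EE[of "pt k LX" _ k] notin_EE[of "pt k LY" _ k] by auto
  have d: "{pt k LC, pt k LX} \<noteq> {pt k LD, pt k LY}" "{pt k LC, pt k LX} \<noteq> {pt k LX, pt k LY}"
    "{pt k LD, pt k LY} \<noteq> {pt k LX, pt k LY}" by (auto simp: doubleton_eq_iff)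
  show "{pt k LC, pt k LX} \<in> Ext k F (b1, b2, b3) \<longleftrightarrow> b1"
    "{pt k LD, pt k LY} \<in> Ext k F (b1, b2, b3) \<longleftrightarrow> b2"
    "{pt k LX, pt k LY} \<in> Ext k F (b1, b2, b3) \<longleftrightarrow> b3"
    using n d by (auto simp: addif_def)
qed

lemma Ext_surj:
  assumes k: "1 \<le> k" and F': "F' \<subseteq> EE (Suc k)"
  shows "F' = Ext k (F' \<inter> EE k) ({pt k LC, pt k LX} \<in> F', {pt k LD, pt k LY} \<in> F', {pt k LX, pt k LY} \<in> F')"
  using F' EE_Suc[OF k] by (auto simp: addif_def)


definition Phi :: "((lab \<Rightarrow> lab \<Rightarrow> bool) \<Rightarrow> real) \<Rightarrow> (lab \<Rightarrow> lab \<Rightarrow> bool) \<Rightarrow> real" where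
  "Phi \<phi> \<sigma> = (\<Sum>bs\<in>UNIV. if ok \<sigma> bs then \<phi> (trs \<sigma> bs) else 0)"

lemma W_step:
  assumes k: "1 \<le> k"
  shows "(\<Sum>F\<in>GG (Suc k). \<phi> (rel (Suc k) F)) = (\<Sum>F\<in>GG k. Phi \<phi> (rel k F))"
proof -
  define D where "D = Sigma (GG k) (\<lambda>F. {bs. ok (rel k F) bs})"
  define h where "h = (\<lambda>(F, bs). Ext k F bs)"
  have img: "GG (Suc k) = h ` D"
  proof
    show "GG (Suc k) \<subseteq> h ` D"
    proof
      fix F' assume "F' \<in> GG (Suc k)"
      then have g: "good (Suc k) F'" unfolding GG_def by simp
      then have sub: "F' \<subseteq> EE (Suc k)" unfolding good_def by simp
      define F where "F = F' \<inter> EE k"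
      define bs where "bs = ({pt k LC, pt k LX} \<in> F', {pt k LD, pt k LY} \<in> F', {pt k LX, pt k LY} \<in> F')"
      have e: "F' = Ext k F bs" unfolding F_def bs_def by (rule Ext_surj[OF k sub])
      have FE: "F \<subseteq> EE k" unfolding F_def by simp
      have "good k F \<and> ok (rel k F) bs" using g e good_Ext[OF k FE, of bs] by simp
      then have "(F, bs) \<in> D" unfolding D_def GG_def by simp
      moreover have "F' = h (F, bs)" unfolding h_def using e by simp
      ultimately show "F' \<in> h ` D" by blast
    qed
  next
    show "h ` D \<subseteq> GG (Suc k)"
    proof
      fix F' assume "F' \<in> h ` D"
      then obtain F bs where p: "(F, bs) \<in> D" "F' = Ext k F bs" unfolding h_def by auto
      then have g: "good k F" and o: "ok (rel k F) bs" unfolding D_def GG_def by auto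
      have FE: "F \<subseteq> EE k" using g unfolding good_def by simp
      have "good (Suc k) (Ext k F bs)" using good_Ext[OF k FE, of bs] g o by simp
      then show "F' \<in> GG (Suc k)" using p unfolding GG_def by simp
    qed
  qed
  have inj: "inj_on h D"
  proof
    fix p q assume p: "p \<in> D" and q: "q \<in> D" and e: "h p = h q"
    obtain F bs where pp: "p = (F, bs)" by (cases p) auto
    obtain G cs where qq: "q = (G, cs)" by (cases q) auto
    have FE: "F \<subseteq> EE k" using p pp unfolding D_def GG_def good_def by auto
    have GE: "G \<subseteq> EE k" using q qq unfolding D_def GG_def good_def by auto
    have e': "Ext k F bs = Ext k G cs" using e pp qq unfolding h_def by simp
    have "F = G" using Ext_inter[OF FE, of bs] Ext_inter[OF GE, of cs] e' by simp
    moreover have "bs = cs"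
    proof -
      obtain b1 b2 b3 where b: "bs = (b1, b2, b3)" by (cases bs) auto
      obtain c1 c2 c3 where c: "cs = (c1, c2, c3)" by (cases cs) auto
      have "b1 = c1" "b2 = c2" "b3 = c3"
        using Ext_mem[OF FE, of b1 b2 b3] Ext_mem[OF GE, of c1 c2 c3] e' b c by simp_all
      then show ?thesis using b c by simp
    qed
    ultimately show "p = q" using pp qq by simp
  qed
  have "(\<Sum>F\<in>GG (Suc k). \<phi> (rel (Suc k) F)) = (\<Sum>p\<in>D. \<phi> (rel (Suc k) (h p)))"
    unfolding img by (rule sum.reindex[OF inj, unfolded comp_def])
  also have "\<dots> = (\<Sum>p\<in>D. \<phi> (trs (rel k (fst p)) (snd p)))"
  proof (rule sum.cong[OF refl])
    fix p assume "p \<in> D"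
    then obtain F bs where pp: "p = (F, bs)" "good k F" unfolding D_def GG_def by auto
    then have FE: "F \<subseteq> EE k" unfolding good_def by simp
    show "\<phi> (rel (Suc k) (h p)) = \<phi> (trs (rel k (fst p)) (snd p))"
      using rel_Suc_Ext[OF k FE, of bs] pp unfolding h_def by simp
  qed
  also have "\<dots> = (\<Sum>F\<in>GG k. \<Sum>bs\<in>{bs. ok (rel k F) bs}. \<phi> (trs (rel k F) bs))"
    unfolding D_def by (rule sum.Sigma[symmetric, unfolded split_def]) (simp_all add: finite_GG)
  also have "\<dots> = (\<Sum>F\<in>GG k. Phi \<phi> (rel k F))"
  proof (rule sum.cong[OF refl])
    fix F
    have "{bs. ok (rel k F) bs} = {bs \<in> UNIV. ok (rel k F) bs}" by simp
    then show "(\<Sum>bs\<in>{bs. ok (rel k F) bs}. \<phi> (trs (rel k F) bs)) = Phi \<phi> (rel k F)"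
      unfolding Phi_def by (simp only: sum.inter_filter[OF finite])
  qed
  finally show ?thesis .
qed

fun Cl :: "nat \<Rightarrow> (nat \<times> bool) set set \<Rightarrow> bool \<times> bool \<Rightarrow> (nat \<times> bool) set set" where
  "Cl n F (b1, b2) = addif b2 {pt n LB, pt n LC} (addif b1 {pt n LA, pt n LD} F)"

fun okc :: "(lab \<Rightarrow> lab \<Rightarrow> bool) \<Rightarrow> bool \<times> bool \<Rightarrow> bool" where
  "okc \<sigma> (b1, b2) = ((b1 \<longrightarrow> \<not> \<sigma> LA LD) \<and> (b2 \<longrightarrow> \<not> sa b1 LA LD \<sigma> LB LC) \<and>
     (\<forall>l\<in>{LB,LC,LD}. sa b2 LB LC (sa b1 LA LD \<sigma>) LA l))"

definition close :: "(lab \<Rightarrow> lab \<Rightarrow> bool) \<Rightarrow> real" where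
  "close \<sigma> = (\<Sum>bs\<in>UNIV. if okc \<sigma> bs then 1 else 0)"

lemma mob_edges:
  assumes "1 \<le> n"
  shows "mobius_edges n = EE n \<union> {{pt n LA, pt n LD}, {pt n LB, pt n LC}}"
proof -
  have eq: "{{(i, b), (i + 1, b)} | i b. 1 \<le> i \<and> i \<le> n - 1} = {{(i, b), (i + 1, b)} | i b. 1 \<le> i \<and> i < n}"
    using assms by (metis (no_types, lifting) Suc_pred' less_Suc_eq_le less_le_trans zero_less_one)
  show ?thesis unfolding mobius_edges_def EE_def eq by simp
qed

lemma t_notin:
  assumes "3 \<le> n"
  shows "{pt n LA, pt n LD} \<notin> EE n" "{pt n LB, pt n LC} \<notin> EE n"
  using assms unfolding EE_def by (auto simp: doubleton_eq_iff)

lemma rel_Cl: "rel n (Cl n F bs) = (case bs of (b1, b2) \<Rightarrow> sa b2 LB LC (sa b1 LA LD (rel n F)))"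
  by (cases bs) (simp only: Cl.simps rel_addif prod.case)

lemma Cl_inter:
  assumes n: "3 \<le> n" and F: "F \<subseteq> EE n" shows "Cl n F bs \<inter> EE n = F"
  using F t_notin[OF n] by (cases bs) (auto simp: addif_def)

lemma Cl_mem:
  assumes n: "3 \<le> n" and F: "F \<subseteq> EE n"
  shows "{pt n LA, pt n LD} \<in> Cl n F (b1, b2) \<longleftrightarrow> b1" "{pt n LB, pt n LC} \<in> Cl n F (b1, b2) \<longleftrightarrow> b2"
proof -
  have d: "{pt n LA, pt n LD} \<noteq> {pt n LB, pt n LC}" using n by (auto simp: doubleton_eq_iff)
  have "{pt n LA, pt n LD} \<notin> F" "{pt n LB, pt n LC} \<notin> F" using F t_notin[OF n] by auto
  then show "{pt n LA, pt n LD} \<in> Cl n F (b1, b2) \<longleftrightarrow> b1" "{pt n LB, pt n LC} \<in> Cl n F (b1, b2) \<longleftrightarrow> b2"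
    using d by (auto simp: addif_def)
qed

lemma Cl_surj:
  assumes n: "3 \<le> n" and T: "T \<subseteq> mobius_edges n"
  shows "T = Cl n (T \<inter> EE n) ({pt n LA, pt n LD} \<in> T, {pt n LB, pt n LC} \<in> T)"
  using T mob_edges[of n] n by (auto simp: addif_def)

lemma acyc_Cl:
  assumes n: "3 \<le> n" and F: "F \<subseteq> EE n"
  shows "acyclic_graph (Cl n F (b1, b2)) \<longleftrightarrow> acyclic_graph F \<and> (b1 \<longrightarrow> \<not> rel n F LA LD) \<and>
     (b2 \<longrightarrow> \<not> sa b1 LA LD (rel n F) LB LC)"
proof -
  define F1 where "F1 = addif b1 {pt n LA, pt n LD} F"
  have n1: "{pt n LA, pt n LD} \<notin> F" using F t_notin[OF n] by auto
  have n2: "{pt n LB, pt n LC} \<notin> F1"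
  proof -
    have "{pt n LB, pt n LC} \<notin> F" using F t_notin[OF n] by auto
    moreover have "{pt n LB, pt n LC} \<noteq> {pt n LA, pt n LD}" using n by (auto simp: doubleton_eq_iff)
    ultimately show ?thesis unfolding F1_def addif_def by auto
  qed
  have r1: "rel n F1 = sa b1 LA LD (rel n F)" unfolding F1_def by (rule rel_addif)
  have "acyclic_graph (Cl n F (b1, b2)) = acyclic_graph (addif b2 {pt n LB, pt n LC} F1)"
    by (simp only: F1_def Cl.simps)
  also have "\<dots> \<longleftrightarrow> acyclic_graph F1 \<and> (b2 \<longrightarrow> \<not> rel n F1 LB LC)"
    by (rule acyc_addif[OF n2]) simp
  also have "acyclic_graph F1 \<longleftrightarrow> acyclic_graph F \<and> (b1 \<longrightarrow> \<not> rel n F LA LD)"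
    unfolding F1_def by (rule acyc_addif[OF n1]) (use n in simp)
  finally show ?thesis using r1 by simp
qed

lemma conn_Cl_S:
  assumes "conn (Cl n F bs) w y" "y \<in> S" "pt n LA \<in> S" "pt n LB \<in> S" "pt n LC \<in> S" "pt n LD \<in> S"
  shows "\<exists>z\<in>S. conn F w z"
proof -
  obtain b1 b2 where bs: "bs = (b1, b2)" by (cases bs) auto
  define F1 where "F1 = addif b1 {pt n LA, pt n LD} F"
  have "conn (addif b2 {pt n LB, pt n LC} F1) w y" using assms(1) bs by (simp only: F1_def Cl.simps)
  then obtain z1 where z1: "z1 \<in> S" "conn F1 w z1"
    using conn_addif_S[of b2 "pt n LB" "pt n LC" F1 w y S] assms(2,4,5) by blast
  then show ?thesis
    using conn_addif_S[of b1 "pt n LA" "pt n LD" F w z1 S] assms(3,6) unfolding F1_def by blast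
qed

lemma conn_Cl_tree:
  assumes n: "3 \<le> n" and F: "F \<subseteq> EE n"
  shows "graph_connected (mobius_verts n) (Cl n F bs) \<longleftrightarrow> termc n F \<and> (\<forall>l\<in>{LB,LC,LD}. rel n (Cl n F bs) LA l)"
proof -
  let ?T = "Cl n F bs"
  have sub: "F \<subseteq> ?T" by (cases bs) (auto simp: addif_def)
  have inV: "pt n l \<in> mobius_verts n" if "l \<in> {LA,LB,LC,LD}" for l
    using that n unfolding mobius_verts_def by auto
  show ?thesis
  proof
    assume C: "graph_connected (mobius_verts n) ?T"
    have CC: "conn ?T u v" if "u \<in> mobius_verts n" "v \<in> mobius_verts n" for u v
      using C[unfolded graph_connected_def, rule_format, OF that] .
    have A_in: "pt n LA \<in> mobius_verts n" by (rule inV) simp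
    have t1: "termc n F" unfolding termc_def
    proof
      fix w assume w: "w \<in> mobius_verts n"
      have c: "conn ?T w (pt n LA)" by (rule CC[OF w A_in])
      have "\<exists>z\<in>pt n ` {LA,LB,LC,LD}. conn F w z"
        by (rule conn_Cl_S[OF c]) auto
      then obtain z where z1: "z \<in> pt n ` {LA,LB,LC,LD}" and z2: "conn F w z" by (rule bexE)
      from z1 obtain a where a1: "a \<in> {LA,LB,LC,LD}" and a2: "z = pt n a" by (rule imageE)
      have "conn F w (pt n a)" using z2 a2 by simp
      then show "\<exists>a\<in>{LA,LB,LC,LD}. conn F w (pt n a)" using a1 by (rule bexI)
    qed
    have t2: "\<forall>l\<in>{LB,LC,LD}. rel n ?T LA l"
    proof
      fix l assume "l \<in> {LB,LC,LD}"
      then have "pt n l \<in> mobius_verts n" using inV by blast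
      then show "rel n ?T LA l" unfolding rel_def by (rule CC[OF A_in])
    qed
    show "termc n F \<and> (\<forall>l\<in>{LB,LC,LD}. rel n ?T LA l)" using t1 t2 by blast
  next
    assume A: "termc n F \<and> (\<forall>l\<in>{LB,LC,LD}. rel n ?T LA l)"
    have toA: "conn ?T w (pt n LA)" if w: "w \<in> mobius_verts n" for w
    proof -
      obtain a where a: "a \<in> {LA,LB,LC,LD}" "conn F w (pt n a)" using A w unfolding termc_def by blast
      have c1: "conn ?T w (pt n a)" using conn_mono[OF sub a(2)] .
      have c2: "conn ?T (pt n a) (pt n LA)"
      proof (cases "a = LA")
        case True then show ?thesis by simp
      next
        case False
        then have "a \<in> {LB,LC,LD}" using a(1) by blast
        then have "conn ?T (pt n LA) (pt n a)" using A unfolding rel_def by blast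
        then show ?thesis by (rule conn_sym)
      qed
      show ?thesis by (rule conn_trans[OF c1 c2])
    qed
    show "graph_connected (mobius_verts n) ?T" unfolding graph_connected_def
    proof (intro ballI)
      fix u v assume u: "u \<in> mobius_verts n" and v: "v \<in> mobius_verts n"
      show "conn ?T u v" using conn_trans[OF toA[OF u] conn_sym[OF toA[OF v]]] .
    qed
  qed
qed

lemma st_Cl:
  assumes n: "3 \<le> n" and F: "F \<subseteq> EE n"
  shows "spanning_tree (mobius_verts n) (mobius_edges n) (Cl n F bs) \<longleftrightarrow> good n F \<and> okc (rel n F) bs"
proof -
  obtain b1 b2 where bs: "bs = (b1, b2)" by (cases bs) auto
  have s: "Cl n F bs \<subseteq> mobius_edges n" using F mob_edges[of n] n by (cases bs) (auto simp: addif_def)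
  have a: "acyclic_graph (Cl n F bs) \<longleftrightarrow> acyclic_graph F \<and> (b1 \<longrightarrow> \<not> rel n F LA LD) \<and>
     (b2 \<longrightarrow> \<not> sa b1 LA LD (rel n F) LB LC)" unfolding bs by (rule acyc_Cl[OF n F])
  have c: "graph_connected (mobius_verts n) (Cl n F bs) \<longleftrightarrow> termc n F \<and>
     (\<forall>l\<in>{LB,LC,LD}. sa b2 LB LC (sa b1 LA LD (rel n F)) LA l)"
    using conn_Cl_tree[OF n F, of bs] rel_Cl[of n F bs] bs by simp
  have o: "okc (rel n F) bs \<longleftrightarrow> (b1 \<longrightarrow> \<not> rel n F LA LD) \<and> (b2 \<longrightarrow> \<not> sa b1 LA LD (rel n F) LB LC) \<and>
     (\<forall>l\<in>{LB,LC,LD}. sa b2 LB LC (sa b1 LA LD (rel n F)) LA l)" unfolding bs by (simp only: okc.simps)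
  show ?thesis unfolding spanning_tree_def good_alt using s a c o F by blast
qed


lemma card_filter_real:
  "real (card {x :: 'a :: finite. P x}) = (\<Sum>x\<in>UNIV. if P x then 1 else 0)"
proof -
  have "(\<Sum>x\<in>UNIV. if P x then 1 else 0) = (\<Sum>x\<in>{x \<in> UNIV. P x}. (1::real))"
    by (rule sum.inter_filter[symmetric, OF finite])
  then show ?thesis by simp
qed

lemma count_close:
  assumes n: "3 \<le> n"
  shows "real (num_spanning_trees (mobius_verts n) (mobius_edges n)) = (\<Sum>F\<in>GG n. close (rel n F))"
proof -
  define ST where "ST = {T. spanning_tree (mobius_verts n) (mobius_edges n) T}"
  define D where "D = Sigma (GG n) (\<lambda>F. {bs. okc (rel n F) bs})"
  define h where "h = (\<lambda>(F, bs). Cl n F bs)"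
  have img: "ST = h ` D"
  proof
    show "ST \<subseteq> h ` D"
    proof
      fix T assume "T \<in> ST"
      then have st: "spanning_tree (mobius_verts n) (mobius_edges n) T" unfolding ST_def by simp
      then have sub: "T \<subseteq> mobius_edges n" unfolding spanning_tree_def by simp
      define F where "F = T \<inter> EE n"
      define bs where "bs = ({pt n LA, pt n LD} \<in> T, {pt n LB, pt n LC} \<in> T)"
      have e: "T = Cl n F bs" unfolding F_def bs_def by (rule Cl_surj[OF n sub])
      have FE: "F \<subseteq> EE n" unfolding F_def by simp
      have "good n F \<and> okc (rel n F) bs" using st e st_Cl[OF n FE, of bs] by simp
      then have "(F, bs) \<in> D" unfolding D_def GG_def by simp
      moreover have "T = h (F, bs)" unfolding h_def using e by simp
      ultimately show "T \<in> h ` D" by blast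
    qed
  next
    show "h ` D \<subseteq> ST"
    proof
      fix T assume "T \<in> h ` D"
      then obtain F bs where p: "(F, bs) \<in> D" "T = Cl n F bs" unfolding h_def by auto
      then have g: "good n F" and o: "okc (rel n F) bs" unfolding D_def GG_def by auto
      have FE: "F \<subseteq> EE n" using g unfolding good_def by simp
      have "spanning_tree (mobius_verts n) (mobius_edges n) (Cl n F bs)" using st_Cl[OF n FE, of bs] g o by simp
      then show "T \<in> ST" using p unfolding ST_def by simp
    qed
  qed
  have inj: "inj_on h D"
  proof
    fix p q assume p: "p \<in> D" and q: "q \<in> D" and e: "h p = h q"
    obtain F bs where pp: "p = (F, bs)" by (cases p) auto
    obtain G cs where qq: "q = (G, cs)" by (cases q) auto
    have FE: "F \<subseteq> EE n" using p pp unfolding D_def GG_def good_def by auto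
    have GE: "G \<subseteq> EE n" using q qq unfolding D_def GG_def good_def by auto
    have e': "Cl n F bs = Cl n G cs" using e pp qq unfolding h_def by simp
    have "F = G" using Cl_inter[OF n FE, of bs] Cl_inter[OF n GE, of cs] e' by simp
    moreover have "bs = cs"
    proof -
      obtain b1 b2 where b: "bs = (b1, b2)" by (cases bs) auto
      obtain c1 c2 where c: "cs = (c1, c2)" by (cases cs) auto
      have "b1 = c1" "b2 = c2"
        using Cl_mem[OF n FE, of b1 b2] Cl_mem[OF n GE, of c1 c2] e' b c by simp_all
      then show ?thesis using b c by simp
    qed
    ultimately show "p = q" using pp qq by simp
  qed
  have "card ST = card D" unfolding img by (rule card_image[OF inj])
  also have "card D = (\<Sum>F\<in>GG n. card {bs. okc (rel n F) bs})"
    unfolding D_def by (rule card_SigmaI) (simp_all add: finite_GG)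
  finally have "real (card ST) = (\<Sum>F\<in>GG n. real (card {bs. okc (rel n F) bs}))" by simp
  also have "\<dots> = (\<Sum>F\<in>GG n. close (rel n F))"
    unfolding close_def by (simp only: card_filter_real)
  finally show ?thesis unfolding num_spanning_trees_def ST_def .
qed

fun LU :: "nat \<Rightarrow> int \<times> int" where
  "LU 0 = (1, 0)"
| "LU (Suc j) = (2 * fst (LU j) + 3 * snd (LU j), fst (LU j) + 2 * snd (LU j))"

definition Lr :: "nat \<Rightarrow> real" where "Lr j = real_of_int (fst (LU j))"
definition Ur :: "nat \<Rightarrow> real" where "Ur j = real_of_int (snd (LU j))"

lemma Lr_Suc: "Lr (Suc j) = 2 * Lr j + 3 * Ur j" unfolding Lr_def Ur_def by simp
lemma Ur_Suc: "Ur (Suc j) = Lr j + 2 * Ur j" unfolding Lr_def Ur_def by simp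
lemma Lr0: "Lr 0 = 1" unfolding Lr_def by simp
lemma Ur0: "Ur 0 = 0" unfolding Ur_def by simp

definition cc :: "nat \<Rightarrow> bool \<Rightarrow> bool \<Rightarrow> bool \<Rightarrow> bool \<Rightarrow> bool \<Rightarrow> bool \<Rightarrow> real" where
  "cc j ab ac ad bc bd cd =
    (if (ab, ac, ad, bc, bd, cd) = (False, False, False, False, False, False) then (1) * (Ur j) else
    (if (ab, ac, ad, bc, bd, cd) = (False, False, False, False, False, True) then (1) * (Lr j) + (1) * (Ur j) else
    (if (ab, ac, ad, bc, bd, cd) = (False, False, False, False, True, False) then (1/2) * (1) + (1/2) * (Lr j) + (1) * (Ur j) + (1/2) * (real j * Ur j) else
    (if (ab, ac, ad, bc, bd, cd) = (False, False, False, True, False, False) then (-1/2) * (1) + (1/2) * (Lr j) + (1) * (Ur j) + (1/2) * (real j * Ur j) else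
    (if (ab, ac, ad, bc, bd, cd) = (False, False, False, True, True, True) then (1) * (Lr j) + (3/2) * (Ur j) + (1/2) * (real j * Lr j) + (1/2) * (real j * Ur j) else
    (if (ab, ac, ad, bc, bd, cd) = (False, False, True, False, False, False) then (-1/2) * (1) + (1/2) * (Lr j) + (1) * (Ur j) + (1/2) * (real j * Ur j) else
    (if (ab, ac, ad, bc, bd, cd) = (False, False, True, True, False, False) then (-1) * (1) + (-1) * (real j) + (1) * (Lr j) + (1) * (Ur j) + (1) * (real j * Lr j) + (1) * (real j * Ur j) else
    (if (ab, ac, ad, bc, bd, cd) = (False, True, False, False, False, False) then (1/2) * (1) + (1/2) * (Lr j) + (1) * (Ur j) + (1/2) * (real j * Ur j) else
    (if (ab, ac, ad, bc, bd, cd) = (False, True, False, False, True, False) then (1) * (1) + (1) * (real j) + (1) * (Lr j) + (1) * (Ur j) + (1) * (real j * Lr j) + (1) * (real j * Ur j) else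
    (if (ab, ac, ad, bc, bd, cd) = (False, True, True, False, False, True) then (1) * (Lr j) + (3/2) * (Ur j) + (1/2) * (real j * Lr j) + (1/2) * (real j * Ur j) else
    (if (ab, ac, ad, bc, bd, cd) = (True, False, False, False, False, False) then (1) * (Lr j) + (1) * (Ur j) else
    (if (ab, ac, ad, bc, bd, cd) = (True, False, False, False, False, True) then (2) * (Lr j) + (4) * (Ur j) else
    (if (ab, ac, ad, bc, bd, cd) = (True, False, True, False, True, False) then (1) * (Lr j) + (3/2) * (Ur j) + (1/2) * (real j * Lr j) + (1/2) * (real j * Ur j) else
    (if (ab, ac, ad, bc, bd, cd) = (True, True, False, True, False, False) then (1) * (Lr j) + (3/2) * (Ur j) + (1/2) * (real j * Lr j) + (1/2) * (real j * Ur j) else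
    (if (ab, ac, ad, bc, bd, cd) = (True, True, True, True, True, True) then (1) * (Lr j) + (2) * (Ur j) + (1) * (real j * Lr j) + (2) * (real j * Ur j) else 0)))))))))))))))"

fun mk :: "bool \<Rightarrow> bool \<Rightarrow> bool \<Rightarrow> bool \<Rightarrow> bool \<Rightarrow> bool \<Rightarrow> lab \<Rightarrow> lab \<Rightarrow> bool" where
  "mk ab ac ad bc bd cd LA LA = True"
| "mk ab ac ad bc bd cd LA LB = ab"
| "mk ab ac ad bc bd cd LA LC = ac"
| "mk ab ac ad bc bd cd LA LD = ad"
| "mk ab ac ad bc bd cd LA LX = False"
| "mk ab ac ad bc bd cd LA LY = False"
| "mk ab ac ad bc bd cd LB LA = ab"
| "mk ab ac ad bc bd cd LB LB = True"
| "mk ab ac ad bc bd cd LB LC = bc"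
| "mk ab ac ad bc bd cd LB LD = bd"
| "mk ab ac ad bc bd cd LB LX = False"
| "mk ab ac ad bc bd cd LB LY = False"
| "mk ab ac ad bc bd cd LC LA = ac"
| "mk ab ac ad bc bd cd LC LB = bc"
| "mk ab ac ad bc bd cd LC LC = True"
| "mk ab ac ad bc bd cd LC LD = cd"
| "mk ab ac ad bc bd cd LC LX = False"
| "mk ab ac ad bc bd cd LC LY = False"
| "mk ab ac ad bc bd cd LD LA = ad"
| "mk ab ac ad bc bd cd LD LB = bd"
| "mk ab ac ad bc bd cd LD LC = cd"
| "mk ab ac ad bc bd cd LD LD = True"
| "mk ab ac ad bc bd cd LD LX = False"
| "mk ab ac ad bc bd cd LD LY = False"
| "mk ab ac ad bc bd cd LX LA = False"
| "mk ab ac ad bc bd cd LX LB = False"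
| "mk ab ac ad bc bd cd LX LC = False"
| "mk ab ac ad bc bd cd LX LD = False"
| "mk ab ac ad bc bd cd LX LX = True"
| "mk ab ac ad bc bd cd LX LY = False"
| "mk ab ac ad bc bd cd LY LA = False"
| "mk ab ac ad bc bd cd LY LB = False"
| "mk ab ac ad bc bd cd LY LC = False"
| "mk ab ac ad bc bd cd LY LD = False"
| "mk ab ac ad bc bd cd LY LX = False"
| "mk ab ac ad bc bd cd LY LY = True"

definition tc :: "bool \<Rightarrow> bool \<Rightarrow> bool \<Rightarrow> bool \<Rightarrow> bool \<Rightarrow> bool \<Rightarrow> bool" where
  "tc ab ac ad bc bd cd \<longleftrightarrow> (ab \<and> bc \<longrightarrow> ac) \<and>
    (ab \<and> bd \<longrightarrow> ad) \<and>
    (ac \<and> bc \<longrightarrow> ab) \<and>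
    (ac \<and> cd \<longrightarrow> ad) \<and>
    (ad \<and> bd \<longrightarrow> ab) \<and>
    (ad \<and> cd \<longrightarrow> ac) \<and>
    (ab \<and> ac \<longrightarrow> bc) \<and>
    (ab \<and> ad \<longrightarrow> bd) \<and>
    (bc \<and> cd \<longrightarrow> bd) \<and>
    (bd \<and> cd \<longrightarrow> bc) \<and>
    (ac \<and> ad \<longrightarrow> cd) \<and>
    (bc \<and> bd \<longrightarrow> cd)"

definition c :: "nat \<Rightarrow> (lab \<Rightarrow> lab \<Rightarrow> bool) \<Rightarrow> real" where
  "c j \<sigma> = cc j (\<sigma> LA LB) (\<sigma> LA LC) (\<sigma> LA LD) (\<sigma> LB LC) (\<sigma> LB LD) (\<sigma> LC LD)"

lemma UNIV_bool3: "(UNIV :: (bool \<times> bool \<times> bool) set) =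
  {(False, False, False), (False, False, True), (False, True, False), (False, True, True),
   (True, False, False), (True, False, True), (True, True, False), (True, True, True)}"
proof (rule set_eqI)
  fix x :: "bool \<times> bool \<times> bool"
  obtain a b d where x: "x = (a, b, d)" by (cases x) auto
  show "x \<in> UNIV \<longleftrightarrow> x \<in> {(False, False, False), (False, False, True), (False, True, False), (False, True, True),
   (True, False, False), (True, False, True), (True, True, False), (True, True, True)}"
    unfolding x by (cases a; cases b; cases d) auto
qed

lemma sum_bool3: "(\<Sum>bs\<in>(UNIV :: (bool \<times> bool \<times> bool) set). f bs) =
  f (False, False, False) + f (False, False, True) + f (False, True, False) + f (False, True, True) +
  f (True, False, False) + f (True, False, True) + f (True, True, False) + f (True, True, True)"
  unfolding UNIV_bool3 by (simp add: algebra_simps)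

lemma step_id:
  assumes "tc ab ac ad bc bd cd"
  shows "c (Suc j) (mk ab ac ad bc bd cd) = Phi (c j) (mk ab ac ad bc bd cd)"
  using assms unfolding Phi_def sum_bool3 c_def
  by (cases ab; cases ac; cases ad; cases bc; cases bd; cases cd)
     (simp_all add: tc_def sa_def addE_def trs_def cc_def Lr_Suc Ur_Suc algebra_simps)

lemma Inv_vals:
  assumes I: "Inv \<sigma>"
  shows
    "\<sigma> LA LA = True"
    "\<sigma> LA LX = False"
    "\<sigma> LA LY = False"
    "\<sigma> LB LA = \<sigma> LA LB"
    "\<sigma> LB LB = True"
    "\<sigma> LB LX = False"
    "\<sigma> LB LY = False"
    "\<sigma> LC LA = \<sigma> LA LC"
    "\<sigma> LC LB = \<sigma> LB LC"
    "\<sigma> LC LC = True"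
    "\<sigma> LC LX = False"
    "\<sigma> LC LY = False"
    "\<sigma> LD LA = \<sigma> LA LD"
    "\<sigma> LD LB = \<sigma> LB LD"
    "\<sigma> LD LC = \<sigma> LC LD"
    "\<sigma> LD LD = True"
    "\<sigma> LD LX = False"
    "\<sigma> LD LY = False"
    "\<sigma> LX LA = False"
    "\<sigma> LX LB = False"
    "\<sigma> LX LC = False"
    "\<sigma> LX LD = False"
    "\<sigma> LX LX = True"
    "\<sigma> LX LY = False"
    "\<sigma> LY LA = False"
    "\<sigma> LY LB = False"
    "\<sigma> LY LC = False"
    "\<sigma> LY LD = False"
    "\<sigma> LY LX = False"
    "\<sigma> LY LY = True"
proof -
  have S: "\<And>a b. \<sigma> a b = \<sigma> b a" using InvD(2)[OF I] by blast
  have R: "\<And>a. \<sigma> a a = True" using InvD(1)[OF I] by simp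
  have XY: "\<And>a b. a \<in> {LX, LY} \<or> b \<in> {LX, LY} \<Longrightarrow> \<sigma> a b = (a = b)" using Inv_XY[OF I] by blast
  show "\<sigma> LA LA = True" by (rule R)
  show "\<sigma> LA LX = False" using XY[of LA LX] by simp
  show "\<sigma> LA LY = False" using XY[of LA LY] by simp
  show "\<sigma> LB LA = \<sigma> LA LB" by (rule S)
  show "\<sigma> LB LB = True" by (rule R)
  show "\<sigma> LB LX = False" using XY[of LB LX] by simp
  show "\<sigma> LB LY = False" using XY[of LB LY] by simp
  show "\<sigma> LC LA = \<sigma> LA LC" by (rule S)
  show "\<sigma> LC LB = \<sigma> LB LC" by (rule S)
  show "\<sigma> LC LC = True" by (rule R)
  show "\<sigma> LC LX = False" using XY[of LC LX] by simp
  show "\<sigma> LC LY = False" using XY[of LC LY] by simp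
  show "\<sigma> LD LA = \<sigma> LA LD" by (rule S)
  show "\<sigma> LD LB = \<sigma> LB LD" by (rule S)
  show "\<sigma> LD LC = \<sigma> LC LD" by (rule S)
  show "\<sigma> LD LD = True" by (rule R)
  show "\<sigma> LD LX = False" using XY[of LD LX] by simp
  show "\<sigma> LD LY = False" using XY[of LD LY] by simp
  show "\<sigma> LX LA = False" using XY[of LX LA] by simp
  show "\<sigma> LX LB = False" using XY[of LX LB] by simp
  show "\<sigma> LX LC = False" using XY[of LX LC] by simp
  show "\<sigma> LX LD = False" using XY[of LX LD] by simp
  show "\<sigma> LX LX = True" by (rule R)
  show "\<sigma> LX LY = False" using XY[of LX LY] by simp
  show "\<sigma> LY LA = False" using XY[of LY LA] by simp
  show "\<sigma> LY LB = False" using XY[of LY LB] by simp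
  show "\<sigma> LY LC = False" using XY[of LY LC] by simp
  show "\<sigma> LY LD = False" using XY[of LY LD] by simp
  show "\<sigma> LY LX = False" using XY[of LY LX] by simp
  show "\<sigma> LY LY = True" by (rule R)
qed

lemma Inv_mk:
  assumes I: "Inv \<sigma>"
  shows "\<sigma> = mk (\<sigma> LA LB) (\<sigma> LA LC) (\<sigma> LA LD) (\<sigma> LB LC) (\<sigma> LB LD) (\<sigma> LC LD)"
proof (intro ext)
  fix a b
  note V = Inv_vals[OF I]
  show "\<sigma> a b = mk (\<sigma> LA LB) (\<sigma> LA LC) (\<sigma> LA LD) (\<sigma> LB LC) (\<sigma> LB LD) (\<sigma> LC LD) a b"
    by (cases a; cases b) (simp_all only: mk.simps V)
qed

lemma Inv_tc:
  assumes I: "Inv \<sigma>"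
  shows "tc (\<sigma> LA LB) (\<sigma> LA LC) (\<sigma> LA LD) (\<sigma> LB LC) (\<sigma> LB LD) (\<sigma> LC LD)"
proof -
  have T: "\<And>a b d. \<sigma> a b \<Longrightarrow> \<sigma> b d \<Longrightarrow> \<sigma> a d" using InvD(3)[OF I] by blast
  have S: "\<And>a b. \<sigma> a b \<Longrightarrow> \<sigma> b a" using InvD(2)[OF I] by blast
  show ?thesis unfolding tc_def by (meson T S)
qed

lemma Phi_c:
  assumes I: "Inv \<sigma>"
  shows "Phi (c j) \<sigma> = c (Suc j) \<sigma>"
  using step_id[OF Inv_tc[OF I], of j] Inv_mk[OF I] by simp

lemma UNIV_bool2: "(UNIV :: (bool \<times> bool) set) = {(False, False), (False, True), (True, False), (True, True)}"
proof (rule set_eqI)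
  fix x :: "bool \<times> bool"
  obtain a b where x: "x = (a, b)" by (cases x) auto
  show "x \<in> UNIV \<longleftrightarrow> x \<in> {(False, False), (False, True), (True, False), (True, True)}"
    unfolding x by (cases a; cases b) auto
qed

lemma sum_bool2: "(\<Sum>bs\<in>(UNIV :: (bool \<times> bool) set). f bs) =
  f (False, False) + f (False, True) + f (True, False) + f (True, True)"
  unfolding UNIV_bool2 by (simp add: algebra_simps)

lemma close_id:
  assumes "tc ab ac ad bc bd cd"
  shows "c 0 (mk ab ac ad bc bd cd) = close (mk ab ac ad bc bd cd)"
  using assms unfolding close_def sum_bool2 c_def
  by (cases ab; cases ac; cases ad; cases bc; cases bd; cases cd)
     (simp_all add: tc_def sa_def addE_def cc_def Lr0 Ur0)

lemma close_c:
  assumes I: "Inv \<sigma>"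
  shows "close \<sigma> = c 0 \<sigma>"
  using close_id[OF Inv_tc[OF I]] Inv_mk[OF I] by simp

lemma conn_empty: "conn {} x y \<longleftrightarrow> x = y"
proof
  assume "conn {} x y"
  then have "y = x" by (rule conn_isolated[rotated]) simp
  then show "x = y" by simp
qed simp

lemma EE1: "EE 1 = {{(1, False), (1, True)}}"
  unfolding EE_def by auto

lemma acyc_empty: "acyclic_graph {}"
  unfolding acyclic_graph_def is_cycle_def by auto

lemma rel1_empty: "rel 1 {} a b \<longleftrightarrow> pt 1 a = pt 1 b"
  unfolding rel_def conn_empty ..

lemma single_eq: "{{(1::nat, False), (1, True)}} = addif True {pt 1 LA, pt 1 LB} {}"
  by (simp add: addif_def)

lemma rel1_single: "rel 1 {{(1, False), (1, True)}} = sa True LA LB (rel 1 {})"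
  unfolding single_eq by (rule rel_addif)

lemma acyc_single: "acyclic_graph {{(1::nat, False), (1::nat, True)}}"
proof -
  have "acyclic_graph (addif True {pt 1 LA, pt 1 LB} {}) \<longleftrightarrow> acyclic_graph ({} :: (nat \<times> bool) set set) \<and> (True \<longrightarrow> \<not> rel 1 {} LA LB)"
    by (rule acyc_addif[of 1 LA LB "{}" True]) simp_all
  then show ?thesis unfolding single_eq[symmetric] using acyc_empty rel1_empty[of LA LB] by simp
qed

lemma verts1: "mobius_verts 1 = {pt 1 LA, pt 1 LB}"
  unfolding mobius_verts_def by auto

lemma termc1: "termc 1 F"
  unfolding termc_def verts1 by auto

lemma GG1: "GG 1 = {{}, {{(1, False), (1, True)}}}"
proof -
  have "good 1 F \<longleftrightarrow> F = {} \<or> F = {{(1, False), (1, True)}}" for F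
    unfolding good_alt EE1 using acyc_empty acyc_single termc1 by auto
  then show ?thesis unfolding GG_def by auto
qed

lemma W1: "(\<Sum>F\<in>GG 1. \<phi> (rel 1 F)) = \<phi> (rel 1 {}) + \<phi> (rel 1 {{(1, False), (1, True)}})"
  unfolding GG1 by simp

lemma W_ind:
  assumes "1 \<le> k"
  shows "(\<Sum>F\<in>GG k. c j (rel k F)) = (\<Sum>F\<in>GG 1. c (j + (k - 1)) (rel 1 F))"
  using assms
proof (induction k arbitrary: j rule: nat_induct_at_least)
  case base then show ?case by simp
next
  case (Suc k)
  have "(\<Sum>F\<in>GG (Suc k). c j (rel (Suc k) F)) = (\<Sum>F\<in>GG k. Phi (c j) (rel k F))"
    by (rule W_step[OF Suc.hyps(1)])
  also have "\<dots> = (\<Sum>F\<in>GG k. c (Suc j) (rel k F))"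
  proof (rule sum.cong[OF refl])
    fix F assume "F \<in> GG k"
    then have "F \<subseteq> EE k" unfolding GG_def good_def by simp
    then have "Inv (rel k F)" by (rule Inv_rel[OF Suc.hyps(1)])
    then show "Phi (c j) (rel k F) = c (Suc j) (rel k F)" by (rule Phi_c)
  qed
  also have "\<dots> = (\<Sum>F\<in>GG 1. c (Suc j + (k - 1)) (rel 1 F))" by (rule Suc.IH)
  also have "Suc j + (k - 1) = j + (Suc k - 1)" using Suc.hyps(1) by simp
  finally show ?case .
qed

lemma final_c: "c j (rel 1 {}) + c j (rel 1 {{(1, False), (1, True)}}) = (real j + 1) * (Lr (Suc j) + 1)"
proof -
  have v0: "c j (rel 1 {}) = cc j False True False False True False"
    unfolding c_def rel1_empty by simp
  have v1: "c j (rel 1 {{(1, False), (1, True)}}) = cc j True True True True True True"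
    unfolding c_def rel1_single sa_def addE_def rel1_empty by simp
  have w0: "cc j False True False False True False = 1 + real j + Lr j + Ur j + real j * Lr j + real j * Ur j"
    unfolding cc_def by simp
  have w1: "cc j True True True True True True = Lr j + 2 * Ur j + real j * Lr j + 2 * (real j * Ur j)"
    unfolding cc_def by simp
  show ?thesis unfolding v0 v1 w0 w1 Lr_Suc by (simp add: algebra_simps)
qed

lemma Lr_closed: "Lr n = ((2 + sqrt 3) ^ n + (2 - sqrt 3) ^ n) / 2 \<and>
    Ur n = ((2 + sqrt 3) ^ n - (2 - sqrt 3) ^ n) / (2 * sqrt 3)"
proof (induction n)
  case 0 then show ?case by (simp add: Lr0 Ur0)
next
  case (Suc n)
  define P where "P = (2 + sqrt 3) ^ n"
  define Q where "Q = (2 - sqrt 3) ^ n"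
  have s3: "sqrt 3 * sqrt 3 = (3::real)" by simp
  have s0: "sqrt 3 \<noteq> (0::real)" by simp
  have s3b: "\<And>x. sqrt 3 * (sqrt 3 * x) = 3 * (x::real)"
    by (metis s3 mult.assoc)
  have L: "Lr n = (P + Q) / 2" and U: "Ur n = (P - Q) / (2 * sqrt 3)" using Suc.IH unfolding P_def Q_def by auto
  have "Lr (Suc n) = (P + Q) + 3 * ((P - Q) / (2 * sqrt 3))" unfolding Lr_Suc L U by simp
  also have "\<dots> = ((2 + sqrt 3) * P + (2 - sqrt 3) * Q) / 2"
    using s0 by (simp add: field_simps s3 s3b)
  finally have l: "Lr (Suc n) = ((2 + sqrt 3) ^ Suc n + (2 - sqrt 3) ^ Suc n) / 2"
    unfolding P_def Q_def by simp
  have "Ur (Suc n) = (P + Q) / 2 + 2 * ((P - Q) / (2 * sqrt 3))" unfolding Ur_Suc L U by simp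
  also have "\<dots> = ((2 + sqrt 3) * P - (2 - sqrt 3) * Q) / (2 * sqrt 3)"
    using s0 by (simp add: field_simps s3 s3b)
  finally have u: "Ur (Suc n) = ((2 + sqrt 3) ^ Suc n - (2 - sqrt 3) ^ Suc n) / (2 * sqrt 3)"
    unfolding P_def Q_def by simp
  show ?case using l u by simp
qed

theorem theorem3p4:
  fixes n :: nat
  assumes "n \<ge> 3"
  shows "real (num_spanning_trees (mobius_verts n) (mobius_edges n))
         = real n / 2 * ((2 + sqrt 3) ^ n + (2 - sqrt 3) ^ n + 2)"
proof -
  have n1: "1 \<le> n" using assms by simp
  have "real (num_spanning_trees (mobius_verts n) (mobius_edges n)) = (\<Sum>F\<in>GG n. close (rel n F))"
    by (rule count_close[OF assms])
  also have "\<dots> = (\<Sum>F\<in>GG n. c 0 (rel n F))"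
  proof (rule sum.cong[OF refl])
    fix F assume "F \<in> GG n"
    then have "F \<subseteq> EE n" unfolding GG_def good_def by simp
    then have "Inv (rel n F)" by (rule Inv_rel[OF n1])
    then show "close (rel n F) = c 0 (rel n F)" by (rule close_c)
  qed
  also have "\<dots> = (\<Sum>F\<in>GG 1. c (n - 1) (rel 1 F))" using W_ind[OF n1, of 0] by simp
  also have "\<dots> = (real (n - 1) + 1) * (Lr (Suc (n - 1)) + 1)" unfolding W1 by (rule final_c)
  also have "\<dots> = real n * (Lr n + 1)" using n1 by (simp add: of_nat_diff)
  also have "\<dots> = real n / 2 * ((2 + sqrt 3) ^ n + (2 - sqrt 3) ^ n + 2)"
  proof -
    have L: "Lr n = ((2 + sqrt 3) ^ n + (2 - sqrt 3) ^ n) / 2" using Lr_closed[of n] by (rule conjunct1)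
    show ?thesis unfolding L by (simp add: field_simps)
  qed
  finally show ?thesis .
qed

end
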